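(* Let $A_1,\dots,A_k\in H_n$ and $B_1,\dots,B_k\in H_m$. There is a completely positive map $\Phi:M_n\to M_m$ with $\Phi(A_j)=B_j$ for $j=1,\dots,k$ if and only if there exist $\gamma>0$ and a unital completely positive map $\Psi:M_{n+1}\to M_m$ with $\Psi(A_j\oplus[0])=\gamma^{-1}B_j$ for $j=1,\dots,k$.
   Context: $H_n$ is the set of $n\times n$ Hermitian matrices; $A\oplus[0]$ denotes the $(n+1)\times(n+1)$ block diagonal matrix with blocks $A$ and the $1\times1$ zero matrix. A linear map is completely positive if all ampliations $I_k\otimes\Phi$ preserve positive semidefiniteness; unital means $\Psi(I_{n+1})=I_m$. *)

theory Defs
  imports "HOL-Analysis.Analysis" "Jordan_Normal_Form.Matrix"
begin

definition hermitian_mat :: "nat \<Rightarrow> complex mat \<Rightarrow> bool" where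
  "hermitian_mat n A \<longleftrightarrow> A \<in> carrier_mat n n \<and>
     (\<forall>i<n. \<forall>j<n. A $$ (i, j) = cnj (A $$ (j, i)))"

definition psd_mat :: "nat \<Rightarrow> complex mat \<Rightarrow> bool" where
  "psd_mat n A \<longleftrightarrow> hermitian_mat n A \<and>
     (\<forall>v \<in> carrier_vec n. Im (conjugate v \<bullet> (A *\<^sub>v v)) = 0 \<and> 0 \<le> Re (conjugate v \<bullet> (A *\<^sub>v v)))"

text \<open>Complex-linear maps from M_n to M_m (only values on M_n matter).\<close>
definition linear_map_mat :: "nat \<Rightarrow> nat \<Rightarrow> (complex mat \<Rightarrow> complex mat) \<Rightarrow> bool" where
  "linear_map_mat n m \<Phi> \<longleftrightarrow>
     (\<forall>X \<in> carrier_mat n n. \<Phi> X \<in> carrier_mat m m) \<and>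
     (\<forall>X \<in> carrier_mat n n. \<forall>Y \<in> carrier_mat n n. \<Phi> (X + Y) = \<Phi> X + \<Phi> Y) \<and>
     (\<forall>c. \<forall>X \<in> carrier_mat n n. \<Phi> (c \<cdot>\<^sub>m X) = c \<cdot>\<^sub>m \<Phi> X)"

text \<open>Ampliation I_k \<otimes> \<Phi>: a (k n) x (k n) matrix viewed as a k x k block matrix with
  n x n blocks is mapped blockwise by \<Phi> to a (k m) x (k m) matrix.\<close>
definition ampliation :: "nat \<Rightarrow> nat \<Rightarrow> nat \<Rightarrow> (complex mat \<Rightarrow> complex mat) \<Rightarrow> complex mat \<Rightarrow> complex mat" where
  "ampliation k n m \<Phi> X = mat (k * m) (k * m) (\<lambda>(r, s).
     \<Phi> (mat n n (\<lambda>(p, q). X $$ ((r div m) * n + p, (s div m) * n + q))) $$ (r mod m, s mod m))"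

definition completely_positive :: "nat \<Rightarrow> nat \<Rightarrow> (complex mat \<Rightarrow> complex mat) \<Rightarrow> bool" where
  "completely_positive n m \<Phi> \<longleftrightarrow> linear_map_mat n m \<Phi> \<and>
     (\<forall>k X. psd_mat (k * n) X \<longrightarrow> psd_mat (k * m) (ampliation k n m \<Phi> X))"

definition unital_map :: "nat \<Rightarrow> nat \<Rightarrow> (complex mat \<Rightarrow> complex mat) \<Rightarrow> bool" where
  "unital_map n m \<Psi> \<longleftrightarrow> \<Psi> (1\<^sub>m n) = 1\<^sub>m m"

definition direct_sum_zero :: "nat \<Rightarrow> complex mat \<Rightarrow> complex mat" where
  "direct_sum_zero n A = four_block_mat A (0\<^sub>m n 1) (0\<^sub>m 1 n) (0\<^sub>m 1 1)"

end

theory Submission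
  imports Defs
begin

definition qf :: "nat \<Rightarrow> complex mat \<Rightarrow> (nat \<Rightarrow> complex) \<Rightarrow> complex" where
  "qf N M f = (\<Sum>i<N. \<Sum>j<N. cnj (f i) * M$$(i,j) * f j)"

lemma qf_eq: "M \<in> carrier_mat N N \<Longrightarrow> v \<in> carrier_vec N \<Longrightarrow>
   conjugate v \<bullet> (M *\<^sub>v v) = qf N M (\<lambda>i. vec_index v i)"
  unfolding qf_def scalar_prod_def
  by (auto simp: mult_mat_vec_def scalar_prod_def sum_distrib_left atLeast0LessThan mult.assoc intro!: sum.cong)

lemma psd_iff: "psd_mat N M \<longleftrightarrow> hermitian_mat N M \<and> (\<forall>f::nat\<Rightarrow>complex. Im (qf N M f) = 0 \<and> 0 \<le> Re (qf N M f))"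
proof
  assume a: "psd_mat N M"
  hence c: "M \<in> carrier_mat N N" by (simp add: psd_mat_def hermitian_mat_def)
  show "hermitian_mat N M \<and> (\<forall>f::nat\<Rightarrow>complex. Im (qf N M f) = 0 \<and> 0 \<le> Re (qf N M f))"
  proof (intro conjI allI)
    show "hermitian_mat N M" using a by (simp add: psd_mat_def)
    fix f :: "nat \<Rightarrow> complex"
    have v: "Matrix.vec N f \<in> carrier_vec N" by simp
    have "qf N M f = qf N M (\<lambda>i. vec_index (Matrix.vec N f) i)" unfolding qf_def by (auto intro!: sum.cong)
    also have "\<dots> = conjugate (Matrix.vec N f) \<bullet> (M *\<^sub>v Matrix.vec N f)" using qf_eq[OF c v] by simp
    finally have e: "qf N M f = conjugate (Matrix.vec N f) \<bullet> (M *\<^sub>v Matrix.vec N f)" .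
    show "Im (qf N M f) = 0" "0 \<le> Re (qf N M f)" using a v unfolding e psd_mat_def by auto
  qed
next
  assume a: "hermitian_mat N M \<and> (\<forall>f::nat\<Rightarrow>complex. Im (qf N M f) = 0 \<and> 0 \<le> Re (qf N M f))"
  hence c: "M \<in> carrier_mat N N" by (simp add: hermitian_mat_def)
  show "psd_mat N M" unfolding psd_mat_def using a qf_eq[OF c] by auto
qed

lemma sum_split: fixes h :: "nat \<Rightarrow> 'a::comm_monoid_add" and k N :: nat shows "(\<Sum>i<k*N. h i) = (\<Sum>R<k. \<Sum>p<N. (h (R*N+p) :: 'a::comm_monoid_add))"
proof -
  have "(\<Sum>i<k*N. h i) = (\<Sum>R<k. sum h {R*N..<R*N+N})" using sum.nat_group[of h N k] by (simp add: mult.commute)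
  also have "\<dots> = (\<Sum>R<k. \<Sum>p<N. h (R*N+p))"
  proof (rule sum.cong[OF refl])
    fix R
    show "sum h {R*N..<R*N+N} = (\<Sum>p<N. h (R*N+p))"
      using sum.shift_bounds_nat_ivl[of h 0 "R*N" N] by (simp add: add.commute atLeast0LessThan)
  qed
  finally show ?thesis .
qed

lemma sum2_reindex:
  fixes e :: "nat \<Rightarrow> nat" and N M :: nat
  assumes inj: "inj_on e {..<N}" and im: "e ` {..<N} \<subseteq> {..<M}"
    and z: "\<And>i j. i<M \<Longrightarrow> j<M \<Longrightarrow> i \<notin> e`{..<N} \<or> j \<notin> e`{..<N} \<Longrightarrow> F i j = 0"
  shows "(\<Sum>i<M. \<Sum>j<M. F i j) = (\<Sum>a<N. \<Sum>b<N. (F (e a) (e b) :: 'a::comm_monoid_add))"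
proof -
  let ?E = "e`{..<N}"
  have 1: "(\<Sum>i\<in>?E. \<Sum>j<M. F i j) = (\<Sum>i<M. \<Sum>j<M. F i j)"
    apply (rule sum.mono_neutral_left) using im z by auto
  have 2: "(\<Sum>j\<in>?E. F i j) = (\<Sum>j<M. F i j)" if "i \<in> ?E" for i
    apply (rule sum.mono_neutral_left) using im z that by auto
  have 3: "(\<Sum>i\<in>?E. \<Sum>j\<in>?E. F i j) = (\<Sum>a<N. \<Sum>b<N. F (e a) (e b))"
    by (simp add: sum.reindex[OF inj])
  show ?thesis using 1 2 3 by simp
qed

lemma psd_restrict:
  fixes e :: "nat \<Rightarrow> nat" and N M :: nat
  assumes Y: "psd_mat M Y" and inj: "inj_on e {..<N}" and im: "e ` {..<N} \<subseteq> {..<M}"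
  shows "psd_mat N (Matrix.mat N N (\<lambda>(i,j). Y$$(e i, e j)))"
proof -
  let ?Y = "Matrix.mat N N (\<lambda>(i,j). Y$$(e i, e j))"
  have hY: "hermitian_mat M Y" and qY: "\<And>g. Im (qf M Y g) = 0 \<and> 0 \<le> Re (qf M Y g)"
    using Y unfolding psd_iff by auto
  have eM: "e i < M" if "i < N" for i using im that by auto
  have h: "hermitian_mat N ?Y" unfolding hermitian_mat_def
  proof (intro conjI allI impI)
    show "?Y \<in> carrier_mat N N" by simp
    fix i j assume "i < N" "j < N"
    then have "e i < M" "e j < M" using eM by auto
    then have "Y $$ (e i, e j) = cnj (Y $$ (e j, e i))" using hY unfolding hermitian_mat_def by blast
    then show "?Y $$ (i,j) = cnj (?Y $$ (j,i))" using \<open>i < N\<close> \<open>j < N\<close> by simp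
  qed
  have q: "qf N ?Y f = qf M Y (\<lambda>j. if j \<in> e`{..<N} then f (inv_into {..<N} e j) else 0)" for f
  proof -
    let ?g = "(\<lambda>j. if j \<in> e`{..<N} then f (inv_into {..<N} e j) else 0)"
    have "qf M Y ?g = (\<Sum>a<N. \<Sum>b<N. cnj (?g (e a)) * Y$$(e a, e b) * ?g (e b))"
      unfolding qf_def by (rule sum2_reindex[OF inj im]) auto
    also have "\<dots> = (\<Sum>a<N. \<Sum>b<N. cnj (f a) * ?Y$$(a,b) * f b)"
    proof (intro sum.cong refl)
      fix a b assume "a \<in> {..<N}" "b \<in> {..<N}"
      then show "cnj (?g (e a)) * Y$$(e a, e b) * ?g (e b) = cnj (f a) * ?Y$$(a,b) * f b"
        using inv_into_f_f[OF inj] by simp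
    qed
    finally show ?thesis unfolding qf_def by simp
  qed
  show ?thesis unfolding psd_iff using h q qY by metis
qed

lemma psd_pad:
  fixes e :: "nat \<Rightarrow> nat" and N M :: nat
  assumes X: "psd_mat N X" and inj: "inj_on e {..<N}" and im: "e ` {..<N} \<subseteq> {..<M}"
    and c: "X' \<in> carrier_mat M M"
    and z: "\<And>i j. i<M \<Longrightarrow> j<M \<Longrightarrow> i \<notin> e`{..<N} \<or> j \<notin> e`{..<N} \<Longrightarrow> X'$$(i,j) = 0"
    and v: "\<And>a b. a<N \<Longrightarrow> b<N \<Longrightarrow> X'$$(e a, e b) = X$$(a,b)"
  shows "psd_mat M X'"
proof -
  have hX: "hermitian_mat N X" and qX: "\<And>g. Im (qf N X g) = 0 \<and> 0 \<le> Re (qf N X g)"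
    using X unfolding psd_iff by auto
  have h: "hermitian_mat M X'" unfolding hermitian_mat_def
  proof (intro conjI c allI impI)
    fix i j assume i: "i<M" and j: "j<M"
    show "X'$$(i,j) = cnj (X'$$(j,i))"
    proof (cases "i \<in> e`{..<N} \<and> j \<in> e`{..<N}")
      case True
      then obtain a b where ab: "a<N" "b<N" "i = e a" "j = e b" by auto
      then have "X$$(a,b) = cnj (X$$(b,a))" using hX unfolding hermitian_mat_def by blast
      then show ?thesis using ab v by simp
    next
      case False
      then show ?thesis using z i j by auto
    qed
  qed
  have q: "qf M X' f = qf N X (\<lambda>a. f (e a))" for f
  proof -
    have "qf M X' f = (\<Sum>a<N. \<Sum>b<N. cnj (f (e a)) * X'$$(e a, e b) * f (e b))"
      unfolding qf_def by (rule sum2_reindex[OF inj im]) (simp add: z)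
    also have "\<dots> = qf N X (\<lambda>a. f (e a))" unfolding qf_def by (simp add: v)
    finally show ?thesis .
  qed
  show ?thesis unfolding psd_iff using h q qX by metis
qed


definition sesq :: "nat \<Rightarrow> complex mat \<Rightarrow> (nat \<Rightarrow> complex) \<Rightarrow> (nat \<Rightarrow> complex) \<Rightarrow> complex" where
  "sesq N M x w = (\<Sum>i<N. \<Sum>j<N. cnj (x i) * M$$(i,j) * w j)"

lemma qf_sesq: "qf N M f = sesq N M f f" by (simp add: qf_def sesq_def)

lemma sesq_expand: "qf N Z (\<lambda>i. x i + u * w i) =
   qf N Z x + u * sesq N Z x w + cnj u * sesq N Z w x + (cnj u * u) * qf N Z w"
  unfolding qf_def sesq_def by (simp add: algebra_simps sum.distrib sum_distrib_left)

lemma sesq_herm: assumes "hermitian_mat N Z" shows "sesq N Z w x = cnj (sesq N Z x w)"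
proof -
  have "cnj (sesq N Z x w) = (\<Sum>i<N. \<Sum>j<N. x i * Z$$(j,i) * cnj (w j))"
    unfolding sesq_def cnj_sum
  proof (intro sum.cong refl)
    fix i j assume "i \<in> {..<N}" "j \<in> {..<N}"
    then have "Z$$(i,j) = cnj (Z$$(j,i))" using assms unfolding hermitian_mat_def by blast
    then show "cnj (cnj (x i) * Z $$ (i, j) * w j) = x i * Z $$ (j, i) * cnj (w j)" by simp
  qed
  also have "\<dots> = (\<Sum>j<N. \<Sum>i<N. x i * Z$$(j,i) * cnj (w j))" by (rule sum.swap)
  also have "\<dots> = sesq N Z w x" unfolding sesq_def by (simp add: algebra_simps)
  finally show ?thesis by simp
qed

lemma pair_ineq:
  assumes Z: "psd_mat N Z"
  shows "- (cmod c * (Re (qf N Z x) + Re (qf N Z w))) \<le> 2 * Re (c * sesq N Z x w)"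
proof (cases "c = 0")
  case True
  then show ?thesis by simp
next
  case False
  have hZ: "hermitian_mat N Z" and qZ: "\<And>g. Im (qf N Z g) = 0 \<and> 0 \<le> Re (qf N Z g)"
    using Z unfolding psd_iff by auto
  define u where "u = c / complex_of_real (cmod c)"
  have cpos: "cmod c > 0" using False by simp
  have uu1: "cnj u * u = (cnj c * c) / (complex_of_real (cmod c))^2" unfolding u_def
    by (simp add: power2_eq_square)
  have uu2: "cnj c * c = (complex_of_real (cmod c))^2" using complex_norm_square[of c] by (simp add: mult.commute)
  have uu: "cnj u * u = 1" using uu1 uu2 False by simp
  have cu: "c = complex_of_real (cmod c) * u" unfolding u_def using False by simp
  let ?s = "sesq N Z x w"
  have "qf N Z (\<lambda>i. x i + u * w i) = qf N Z x + u * ?s + cnj (u * ?s) + qf N Z w"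
    using sesq_expand[of N Z x u w] sesq_herm[OF hZ, of w x] uu by simp
  then have "Re (qf N Z (\<lambda>i. x i + u * w i)) = Re (qf N Z x) + Re (qf N Z w) + 2 * Re (u * ?s)"
    by simp
  then have "0 \<le> Re (qf N Z x) + Re (qf N Z w) + 2 * Re (u * ?s)" using qZ by metis
  then have "0 \<le> cmod c * (Re (qf N Z x) + Re (qf N Z w) + 2 * Re (u * ?s))"
    using cpos by simp
  moreover have "Re (c * ?s) = cmod c * Re (u * ?s)"
    by (subst cu) (simp add: mult.assoc)
  ultimately show ?thesis by (simp add: algebra_simps)
qed


lemma idx_lt: assumes "R < k" "a < m" shows "R*m + a < k*(m::nat)"
proof -
  have "Suc R * m \<le> k * m" using assms(1) by (intro mult_le_mono1) simp
  then show ?thesis using assms(2) by simp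
qed

lemma divmod_lt: assumes "r < k*(m::nat)" shows "r div m < k" "r mod m < m"
proof -
  have "m > 0" using assms by (cases m) auto
  then show "r mod m < m" by simp
  show "r div m < k" using assms by (simp add: less_mult_imp_div_less)
qed

lemma swap4: "(\<Sum>R<k. \<Sum>a<m. \<Sum>S<k. \<Sum>b<m. (T R a S b :: 'x::comm_monoid_add)) =
   (\<Sum>a<m. \<Sum>b<m. \<Sum>R<k. \<Sum>S<k. T R a S b)"
proof -
  have "(\<Sum>R<k. \<Sum>a<m. \<Sum>S<k. \<Sum>b<m. T R a S b) = (\<Sum>a<m. \<Sum>R<k. \<Sum>S<k. \<Sum>b<m. T R a S b)"
    by (rule sum.swap)
  also have "\<dots> = (\<Sum>a<m. \<Sum>R<k. \<Sum>b<m. \<Sum>S<k. T R a S b)"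
    by (rule sum.cong[OF refl], rule sum.cong[OF refl], rule sum.swap)
  also have "\<dots> = (\<Sum>a<m. \<Sum>b<m. \<Sum>R<k. \<Sum>S<k. T R a S b)"
    by (rule sum.cong[OF refl], rule sum.swap)
  finally show ?thesis .
qed

lemma kron_psd:
  fixes k m :: nat
  assumes Z: "psd_mat k Z" and hC: "hermitian_mat m C"
    and dd: "\<And>a. a<m \<Longrightarrow> (\<Sum>b<m. if b = a then 0 else cmod (C$$(a,b))) \<le> Re (C$$(a,a))"
  shows "psd_mat (k*m) (Matrix.mat (k*m) (k*m) (\<lambda>(r,s). Z$$(r div m, s div m) * C$$(r mod m, s mod m)))"
proof -
  let ?K = "Matrix.mat (k*m) (k*m) (\<lambda>(r,s). Z$$(r div m, s div m) * C$$(r mod m, s mod m))"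
  have hZ: "hermitian_mat k Z" and qZ: "\<And>g. Im (qf k Z g) = 0 \<and> 0 \<le> Re (qf k Z g)"
    using Z unfolding psd_iff by auto
  have Cab: "C$$(a,b) = cnj (C$$(b,a))" if "a<m" "b<m" for a b
    using hC that unfolding hermitian_mat_def by blast
  have Zab: "Z$$(a,b) = cnj (Z$$(b,a))" if "a<k" "b<k" for a b
    using hZ that unfolding hermitian_mat_def by blast
  have h: "hermitian_mat (k*m) ?K" unfolding hermitian_mat_def
  proof (intro conjI allI impI)
    show "?K \<in> carrier_mat (k*m) (k*m)" by simp
    fix r s assume r: "r < k*m" and s: "s < k*m"
    show "?K $$ (r,s) = cnj (?K $$ (s,r))"
      using r s divmod_lt[OF r] divmod_lt[OF s] Cab[of "r mod m" "s mod m"] Zab[of "r div m" "s div m"]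
      by simp
  qed
  have q: "Im (qf (k*m) ?K f) = 0 \<and> 0 \<le> Re (qf (k*m) ?K f)" for f
  proof -
    define y where "y a = (\<lambda>R. f (R*m+a))" for a
    define H where "H a b = sesq k Z (y a) (y b)" for a b
    have "qf (k*m) ?K f = (\<Sum>R<k. \<Sum>a<m. \<Sum>S<k. \<Sum>b<m. cnj (f (R*m+a)) * (Z$$(R,S) * C$$(a,b)) * f (S*m+b))"
      unfolding qf_def sum_split
    proof (intro sum.cong refl)
      fix R a S b assume "R \<in> {..<k}" "a \<in> {..<m}" "S \<in> {..<k}" "b \<in> {..<m}"
      then show "cnj (f (R*m+a)) * ?K $$ (R*m+a, S*m+b) * f (S*m+b) =
         cnj (f (R*m+a)) * (Z$$(R,S) * C$$(a,b)) * f (S*m+b)"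
        using idx_lt[of R k a m] idx_lt[of S k b m] by simp
    qed
    also have "\<dots> = (\<Sum>a<m. \<Sum>b<m. \<Sum>R<k. \<Sum>S<k. cnj (f (R*m+a)) * (Z$$(R,S) * C$$(a,b)) * f (S*m+b))"
      by (rule swap4)
    also have "\<dots> = (\<Sum>a<m. \<Sum>b<m. C$$(a,b) * H a b)"
      unfolding H_def sesq_def y_def by (simp add: sum_distrib_left algebra_simps)
    finally have qK: "qf (k*m) ?K f = (\<Sum>a<m. \<Sum>b<m. C$$(a,b) * H a b)" .
    have Hba: "H b a = cnj (H a b)" for a b unfolding H_def by (rule sesq_herm[OF hZ])
    define hh where "hh a = Re (H a a)" for a
    have Haa: "Im (H a a) = 0" "0 \<le> hh a" for a
      using qZ[of "y a"] unfolding hh_def H_def qf_sesq by auto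
    have "cnj (\<Sum>a<m. \<Sum>b<m. C$$(a,b) * H a b) = (\<Sum>a<m. \<Sum>b<m. C$$(b,a) * H b a)"
      unfolding cnj_sum
    proof (intro sum.cong refl)
      fix a b assume "a \<in> {..<m}" "b \<in> {..<m}"
      then show "cnj (C$$(a,b) * H a b) = C$$(b,a) * H b a" using Cab[of b a] Hba[of a b] by simp
    qed
    also have "\<dots> = (\<Sum>a<m. \<Sum>b<m. C$$(a,b) * H a b)" by (rule sum.swap)
    finally have cq: "cnj (\<Sum>a<m. \<Sum>b<m. C$$(a,b) * H a b) = (\<Sum>a<m. \<Sum>b<m. C$$(a,b) * H a b)" .
    have "Im (cnj (\<Sum>a<m. \<Sum>b<m. C$$(a,b) * H a b)) = Im (\<Sum>a<m. \<Sum>b<m. C$$(a,b) * H a b)"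
      using cq by (rule arg_cong)
    then have im: "Im (\<Sum>a<m. \<Sum>b<m. C$$(a,b) * H a b) = 0" by (simp only: cnj.simps)
    define D where "D a = (\<Sum>b<m. if b = a then 0 else cmod (C$$(a,b)))" for a
    define L where "L a b = (if b = a then Re (C$$(a,a)) * hh a else 0)
        - (if b = a then 0 else cmod (C$$(a,b)) * hh a / 2)
        - (if b = a then 0 else cmod (C$$(a,b)) * hh b / 2)" for a b
    have LRe: "L a b \<le> Re (C$$(a,b) * H a b)" if "a < m" "b < m" for a b
    proof (cases "b = a")
      case True
      then show ?thesis unfolding L_def hh_def using Haa(1)[of a] by simp
    next
      case False
      have "- (cmod (C$$(a,b)) * (Re (qf k Z (y a)) + Re (qf k Z (y b)))) \<le> 2 * Re (C$$(a,b) * H a b)"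
        unfolding H_def by (rule pair_ineq[OF Z])
      then show ?thesis using False unfolding L_def hh_def H_def qf_sesq by (simp add: field_simps)
    qed
    have s1: "(\<Sum>b<m. if b = a then Re (C$$(a,a)) * hh a else 0) = Re (C$$(a,a)) * hh a" if "a<m" for a
      using that by (simp add: sum.delta)
    have s2: "(\<Sum>b<m. if b = a then 0 else cmod (C$$(a,b)) * hh a / 2) = hh a * D a / 2" for a
    proof -
      have "(\<Sum>b<m. if b = a then 0 else cmod (C$$(a,b)) * hh a / 2) =
          (\<Sum>b<m. (hh a / 2) * (if b = a then 0 else cmod (C$$(a,b))))" by (rule sum.cong) auto
      also have "\<dots> = (hh a / 2) * D a" unfolding D_def by (rule sum_distrib_left[symmetric])
      finally show ?thesis by simp
    qed
    have s3: "(\<Sum>a<m. \<Sum>b<m. if b = a then 0 else cmod (C$$(a,b)) * hh b / 2) = (\<Sum>b<m. hh b * D b / 2)"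
    proof -
      have "(\<Sum>a<m. \<Sum>b<m. if b = a then 0 else cmod (C$$(a,b)) * hh b / 2)
          = (\<Sum>b<m. \<Sum>a<m. if b = a then 0 else cmod (C$$(a,b)) * hh b / 2)" by (rule sum.swap)
      also have "\<dots> = (\<Sum>b<m. \<Sum>a<m. if a = b then 0 else cmod (C$$(b,a)) * hh b / 2)"
      proof (intro sum.cong refl)
        fix b a assume "b \<in> {..<m}" "a \<in> {..<m}"
        then show "(if b = a then 0 else cmod (C$$(a,b)) * hh b / 2) = (if a = b then 0 else cmod (C$$(b,a)) * hh b / 2)"
          using Cab[of a b] by auto
      qed
      also have "\<dots> = (\<Sum>b<m. hh b * D b / 2)" by (rule sum.cong[OF refl]) (rule s2)
      finally show ?thesis .
    qed
    have "(\<Sum>a<m. \<Sum>b<m. L a b) = (\<Sum>a<m. Re (C$$(a,a)) * hh a) - (\<Sum>a<m. hh a * D a / 2) - (\<Sum>a<m. hh a * D a / 2)"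
    proof -
      have e1: "(\<Sum>a<m. \<Sum>b<m. L a b) = (\<Sum>a<m. \<Sum>b<m. if b = a then Re (C$$(a,a)) * hh a else 0)
         - (\<Sum>a<m. \<Sum>b<m. if b = a then 0 else cmod (C$$(a,b)) * hh a / 2)
         - (\<Sum>a<m. \<Sum>b<m. if b = a then 0 else cmod (C$$(a,b)) * hh b / 2)"
        unfolding L_def by (simp only: sum_subtractf)
      have e2: "(\<Sum>a<m. \<Sum>b<m. if b = a then Re (C$$(a,a)) * hh a else 0) = (\<Sum>a<m. Re (C$$(a,a)) * hh a)"
        by (rule sum.cong[OF refl]) (simp add: s1)
      have e3: "(\<Sum>a<m. \<Sum>b<m. if b = a then 0 else cmod (C$$(a,b)) * hh a / 2) = (\<Sum>a<m. hh a * D a / 2)"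
        by (rule sum.cong[OF refl]) (rule s2)
      show ?thesis unfolding e1 e2 e3 s3 ..
    qed
    also have "\<dots> = (\<Sum>a<m. hh a * (Re (C$$(a,a)) - D a))"
      by (simp add: sum_subtractf[symmetric] algebra_simps)
    also have "\<dots> \<ge> 0"
    proof (rule sum_nonneg)
      fix a assume "a \<in> {..<m}"
      then show "0 \<le> hh a * (Re (C$$(a,a)) - D a)" using Haa(2)[of a] dd[of a] unfolding D_def by simp
    qed
    finally have "0 \<le> (\<Sum>a<m. \<Sum>b<m. L a b)" .
    also have "\<dots> \<le> (\<Sum>a<m. \<Sum>b<m. Re (C$$(a,b) * H a b))"
      by (intro sum_mono) (use LRe in auto)
    also have "\<dots> = Re (\<Sum>a<m. \<Sum>b<m. C$$(a,b) * H a b)" by (simp add: Re_sum)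
    finally show ?thesis using im qK by simp
  qed
  show ?thesis unfolding psd_iff using h q by blast
qed


lemma psd_add: assumes A: "psd_mat N A" and B: "psd_mat N B" shows "psd_mat N (A + B)"
proof -
  have hA: "hermitian_mat N A" and qA: "\<And>g. Im (qf N A g) = 0 \<and> 0 \<le> Re (qf N A g)"
    using A unfolding psd_iff by auto
  have hB: "hermitian_mat N B" and qB: "\<And>g. Im (qf N B g) = 0 \<and> 0 \<le> Re (qf N B g)"
    using B unfolding psd_iff by auto
  have cA: "A \<in> carrier_mat N N" and cB: "B \<in> carrier_mat N N"
    using hA hB unfolding hermitian_mat_def by auto
  have h: "hermitian_mat N (A + B)" unfolding hermitian_mat_def
  proof (intro conjI allI impI)
    show "A + B \<in> carrier_mat N N" using cA cB by simp
    fix i j assume ij: "i < N" "j < N"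
    then have "A$$(i,j) = cnj (A$$(j,i))" "B$$(i,j) = cnj (B$$(j,i))"
      using hA hB unfolding hermitian_mat_def by blast+
    then show "(A + B) $$ (i,j) = cnj ((A + B) $$ (j,i))" using ij cA cB by simp
  qed
  have q: "qf N (A + B) f = qf N A f + qf N B f" for f
    unfolding qf_def sum.distrib[symmetric]
    by (intro sum.cong refl) (use cA cB in \<open>simp add: algebra_simps\<close>)
  show ?thesis unfolding psd_iff using h q qA qB by simp
qed

lemma psd_smult: assumes A: "psd_mat N A" and c: "0 \<le> c"
  shows "psd_mat N (complex_of_real c \<cdot>\<^sub>m A)"
proof -
  have hA: "hermitian_mat N A" and qA: "\<And>g. Im (qf N A g) = 0 \<and> 0 \<le> Re (qf N A g)"
    using A unfolding psd_iff by auto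
  have cA: "A \<in> carrier_mat N N" using hA unfolding hermitian_mat_def by auto
  have h: "hermitian_mat N (complex_of_real c \<cdot>\<^sub>m A)" unfolding hermitian_mat_def
  proof (intro conjI allI impI)
    show "complex_of_real c \<cdot>\<^sub>m A \<in> carrier_mat N N" using cA by simp
    fix i j assume ij: "i < N" "j < N"
    then have "A$$(i,j) = cnj (A$$(j,i))" using hA unfolding hermitian_mat_def by blast
    then show "(complex_of_real c \<cdot>\<^sub>m A) $$ (i,j) = cnj ((complex_of_real c \<cdot>\<^sub>m A) $$ (j,i))"
      using ij cA by simp
  qed
  have q: "qf N (complex_of_real c \<cdot>\<^sub>m A) f = complex_of_real c * qf N A f" for f
    unfolding qf_def sum_distrib_left
    by (intro sum.cong refl) (use cA in \<open>simp add: algebra_simps\<close>)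
  show ?thesis unfolding psd_iff using h q qA c by simp
qed

lemma psd_one: "psd_mat N (1\<^sub>m N)"
proof -
  have h: "hermitian_mat N (1\<^sub>m N)" unfolding hermitian_mat_def by simp
  have q: "qf N (1\<^sub>m N) f = (\<Sum>i<N. complex_of_real ((cmod (f i))^2))" for f
  proof -
    have "qf N (1\<^sub>m N) f = (\<Sum>i<N. \<Sum>j<N. if j = i then cnj (f i) * f i else 0)"
      unfolding qf_def by (intro sum.cong refl) auto
    also have "\<dots> = (\<Sum>i<N. cnj (f i) * f i)" by simp
    also have "\<dots> = (\<Sum>i<N. complex_of_real ((cmod (f i))^2))"
      using complex_norm_square by (simp add: mult.commute)
    finally show ?thesis .
  qed
  show ?thesis unfolding psd_iff using h q by (simp add: Re_sum Im_sum sum_nonneg)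
qed

lemma dm1: "(b::nat) < d \<Longrightarrow> (a*d + b) div d = a" by simp
lemma dm2: "(b::nat) < d \<Longrightarrow> (a*d + b) mod d = b" by simp
lemma dm3: "(j::nat) = j div d * d + j mod d" by simp

definition emb :: "nat \<Rightarrow> nat \<Rightarrow> nat" where "emb n i = i div n * (n+1) + i mod n"

lemma emb_div: assumes "0 < n" shows "emb n i div (n+1) = i div n"
proof -
  have "i mod n < n+1" using assms by (simp add: less_SucI)
  then show ?thesis unfolding emb_def by (rule dm1)
qed
lemma emb_mod: assumes "0 < n" shows "emb n i mod (n+1) = i mod n"
proof -
  have "i mod n < n+1" using assms by (simp add: less_SucI)
  then show ?thesis unfolding emb_def by (rule dm2)
qed
lemma emb_inj: assumes "0 < n" shows "inj_on (emb n) X"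
proof
  fix i j assume "emb n i = emb n j"
  then have "i div n = j div n" "i mod n = j mod n" using emb_div[OF assms] emb_mod[OF assms] by metis+
  then show "i = j" by (metis div_mult_mod_eq)
qed
lemma emb_lt: assumes "0 < n" "i < k*n" shows "emb n i < k*(n+1)"
  unfolding emb_def using idx_lt[of "i div n" k "i mod n" "n+1"] divmod_lt[OF assms(2)] by simp
lemma emb_image_sub: "0 < n \<Longrightarrow> emb n ` {..<k*n} \<subseteq> {..<k*(n+1)}"
  using emb_lt by auto
lemma emb_image: assumes "0 < n" "j < k*(n+1)" "j mod (n+1) < n" shows "j \<in> emb n ` {..<k*n}"
proof
  let ?i = "j div (n+1) * n + j mod (n+1)"
  show "?i \<in> {..<k*n}" using idx_lt[of "j div (n+1)" k "j mod (n+1)" n] divmod_lt[OF assms(2)] assms(3) by simp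
  have "?i div n = j div (n+1)" using assms(3) by (rule dm1)
  moreover have "?i mod n = j mod (n+1)" using assms(3) by (rule dm2)
  ultimately have "emb n ?i = j div (n+1) * (n+1) + j mod (n+1)" unfolding emb_def by simp
  then show "j = emb n ?i" using dm3[of j "n+1"] by simp
qed
lemma emb_block: assumes "p < n" shows "emb n (R*n+p) = R*(n+1)+p"
  unfolding emb_def dm1[OF assms] dm2[OF assms] ..

lemma dsz_alt: assumes "A \<in> carrier_mat n n"
  shows "direct_sum_zero n A = Matrix.mat (n+1) (n+1) (\<lambda>(p,q). if p < n \<and> q < n then A$$(p,q) else 0)"
  using assms unfolding direct_sum_zero_def by (intro eq_matI) auto


lemma dsz_carrier: "direct_sum_zero n X \<in> carrier_mat (n+1) (n+1)" if "X \<in> carrier_mat n n" for X :: "complex mat"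
  using that unfolding direct_sum_zero_def by auto

lemma dir2:
  fixes n m k :: nat and A B :: "nat \<Rightarrow> complex mat" and \<gamma> :: real
  assumes n: "1 \<le> n" and g: "\<gamma> > 0" and cp: "completely_positive (n+1) m \<Psi>"
    and eqs: "\<forall>j<k. \<Psi> (direct_sum_zero n (A j)) = complex_of_real (inverse \<gamma>) \<cdot>\<^sub>m B j"
    and hB: "\<forall>j<k. hermitian_mat m (B j)"
  shows "\<exists>\<Phi>. completely_positive n m \<Phi> \<and> (\<forall>j<k. \<Phi> (A j) = B j)"
proof -
  have n0: "0 < n" using n by simp
  define \<Phi> where "\<Phi> X = complex_of_real \<gamma> \<cdot>\<^sub>m \<Psi> (direct_sum_zero n X)" for X :: "complex mat"
  have lin: "linear_map_mat (n+1) m \<Psi>"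
    and cpp: "\<And>kk X. psd_mat (kk*(n+1)) X \<Longrightarrow> psd_mat (kk*m) (ampliation kk (n+1) m \<Psi> X)"
    using cp unfolding completely_positive_def by auto
  have lc: "\<And>X. X \<in> carrier_mat (n+1) (n+1) \<Longrightarrow> \<Psi> X \<in> carrier_mat m m"
    and la: "\<And>X Y. X \<in> carrier_mat (n+1) (n+1) \<Longrightarrow> Y \<in> carrier_mat (n+1) (n+1) \<Longrightarrow> \<Psi> (X + Y) = \<Psi> X + \<Psi> Y"
    and ls: "\<And>c X. X \<in> carrier_mat (n+1) (n+1) \<Longrightarrow> \<Psi> (c \<cdot>\<^sub>m X) = c \<cdot>\<^sub>m \<Psi> X"
    using lin unfolding linear_map_mat_def by auto
  have dadd: "direct_sum_zero n (X + Y) = direct_sum_zero n X + direct_sum_zero n Y"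
    if "X \<in> carrier_mat n n" "Y \<in> carrier_mat n n" for X Y :: "complex mat"
    using that by (simp add: dsz_alt) (intro eq_matI, auto)
  have dsm: "direct_sum_zero n (c \<cdot>\<^sub>m X) = c \<cdot>\<^sub>m direct_sum_zero n X"
    if "X \<in> carrier_mat n n" for c and X :: "complex mat"
    using that by (simp add: dsz_alt) (intro eq_matI, auto)
  have PhiC: "\<Phi> X \<in> carrier_mat m m" if "X \<in> carrier_mat n n" for X :: "complex mat"
    unfolding \<Phi>_def using lc[OF dsz_carrier[OF that]] by simp
  have linP: "linear_map_mat n m \<Phi>" unfolding linear_map_mat_def
  proof (intro conjI ballI allI)
    fix X :: "complex mat" assume X: "X \<in> carrier_mat n n"
    show "\<Phi> X \<in> carrier_mat m m" by (rule PhiC[OF X])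
  next
    fix X Y :: "complex mat" assume X: "X \<in> carrier_mat n n" and Y: "Y \<in> carrier_mat n n"
    have c1: "\<Psi> (direct_sum_zero n X) \<in> carrier_mat m m" "\<Psi> (direct_sum_zero n Y) \<in> carrier_mat m m"
      using lc dsz_carrier X Y by auto
    show "\<Phi> (X + Y) = \<Phi> X + \<Phi> Y" unfolding \<Phi>_def dadd[OF X Y] la[OF dsz_carrier[OF X] dsz_carrier[OF Y]]
      using c1 by (intro eq_matI) (auto simp: algebra_simps)
  next
    fix c and X :: "complex mat" assume X: "X \<in> carrier_mat n n"
    have c1: "\<Psi> (direct_sum_zero n X) \<in> carrier_mat m m" using lc dsz_carrier X by auto
    show "\<Phi> (c \<cdot>\<^sub>m X) = c \<cdot>\<^sub>m \<Phi> X" unfolding \<Phi>_def dsm[OF X] ls[OF dsz_carrier[OF X]]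
      using c1 by (intro eq_matI) (auto simp: algebra_simps)
  qed
  have cpP: "psd_mat (kk*m) (ampliation kk n m \<Phi> X)" if X: "psd_mat (kk*n) X" for kk and X :: "complex mat"
  proof -
    define X' where "X' = Matrix.mat (kk*(n+1)) (kk*(n+1)) (\<lambda>(i,j).
      if i mod (n+1) < n \<and> j mod (n+1) < n then X$$(i div (n+1) * n + i mod (n+1), j div (n+1) * n + j mod (n+1)) else 0)"
    have psdX': "psd_mat (kk*(n+1)) X'"
    proof (rule psd_pad[OF X emb_inj[OF n0] emb_image_sub[OF n0]])
      show "X' \<in> carrier_mat (kk*(n+1)) (kk*(n+1))" unfolding X'_def by simp
      fix i j assume ij: "i < kk*(n+1)" "j < kk*(n+1)" "i \<notin> emb n ` {..<kk*n} \<or> j \<notin> emb n ` {..<kk*n}"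
      then have "\<not> (i mod (n+1) < n \<and> j mod (n+1) < n)" using emb_image[OF n0] by blast
      then show "X'$$(i,j) = 0" unfolding X'_def using ij by auto
    next
      fix a b assume ab: "a < kk*n" "b < kk*n"
      have l: "emb n a < kk*(n+1)" "emb n b < kk*(n+1)" using emb_lt[OF n0] ab by auto
      have "a mod n < n" "b mod n < n" using n0 by auto
      moreover have e: "emb n a mod (n+1) = a mod n" "emb n a div (n+1) = a div n"
        "emb n b mod (n+1) = b mod n" "emb n b div (n+1) = b div n"
        using emb_mod[OF n0] emb_div[OF n0] by auto
      ultimately show "X'$$(emb n a, emb n b) = X$$(a,b)" unfolding X'_def index_mat(1)[OF l] prod.case e
        by simp
    qed
    have amp: "ampliation kk n m \<Phi> X = complex_of_real \<gamma> \<cdot>\<^sub>m ampliation kk (n+1) m \<Psi> X'"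
      unfolding ampliation_def
    proof (rule eq_matI)
      fix r s assume "r < dim_row (complex_of_real \<gamma> \<cdot>\<^sub>m Matrix.mat (kk*m) (kk*m) (\<lambda>(r, s).
         \<Psi> (Matrix.mat (n+1) (n+1) (\<lambda>(p, q). X' $$ (r div m * (n+1) + p, s div m * (n+1) + q))) $$ (r mod m, s mod m)))"
        "s < dim_col (complex_of_real \<gamma> \<cdot>\<^sub>m Matrix.mat (kk*m) (kk*m) (\<lambda>(r, s).
         \<Psi> (Matrix.mat (n+1) (n+1) (\<lambda>(p, q). X' $$ (r div m * (n+1) + p, s div m * (n+1) + q))) $$ (r mod m, s mod m)))"
      then have r: "r < kk*m" and s: "s < kk*m" by auto
      let ?R = "r div m" and ?S = "s div m"
      have RS: "?R < kk" "?S < kk" "r mod m < m" "s mod m < m" using divmod_lt r s by auto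
      define blk where "blk = Matrix.mat n n (\<lambda>(p, q). X $$ (?R * n + p, ?S * n + q))"
      have blkc: "blk \<in> carrier_mat n n" unfolding blk_def by simp
      have eqb: "direct_sum_zero n blk = Matrix.mat (n+1) (n+1) (\<lambda>(p, q). X' $$ (?R * (n+1) + p, ?S * (n+1) + q))"
        unfolding dsz_alt[OF blkc]
      proof (rule eq_matI)
        fix p q assume "p < dim_row (Matrix.mat (n+1) (n+1) (\<lambda>(p, q). X' $$ (?R * (n+1) + p, ?S * (n+1) + q)))"
          "q < dim_col (Matrix.mat (n+1) (n+1) (\<lambda>(p, q). X' $$ (?R * (n+1) + p, ?S * (n+1) + q)))"
        then have pq: "p < n+1" "q < n+1" by auto
        have l: "?R * (n+1) + p < kk*(n+1)" "?S * (n+1) + q < kk*(n+1)" using idx_lt[OF RS(1) pq(1)] idx_lt[OF RS(2) pq(2)] by auto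
        show "Matrix.mat (n+1) (n+1) (\<lambda>(p,q). if p < n \<and> q < n then blk$$(p,q) else 0) $$ (p,q) =
           Matrix.mat (n+1) (n+1) (\<lambda>(p, q). X' $$ (?R * (n+1) + p, ?S * (n+1) + q)) $$ (p,q)"
        proof -
          have "X' $$ (?R * (n+1) + p, ?S * (n+1) + q) = (if p < n \<and> q < n then X$$(?R*n+p, ?S*n+q) else 0)"
            unfolding X'_def index_mat(1)[OF l] prod.case dm1[OF pq(1)] dm2[OF pq(1)] dm1[OF pq(2)] dm2[OF pq(2)] ..
          then show ?thesis using pq unfolding blk_def by simp
        qed
      qed auto
      have c1: "\<Psi> (direct_sum_zero n blk) \<in> carrier_mat m m" using lc dsz_carrier blkc by auto
      show "Matrix.mat (kk*m) (kk*m) (\<lambda>(r, s). \<Phi> (Matrix.mat n n (\<lambda>(p, q). X $$ (r div m * n + p, s div m * n + q))) $$ (r mod m, s mod m)) $$ (r, s) =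
        (complex_of_real \<gamma> \<cdot>\<^sub>m Matrix.mat (kk*m) (kk*m) (\<lambda>(r, s).
         \<Psi> (Matrix.mat (n+1) (n+1) (\<lambda>(p, q). X' $$ (r div m * (n+1) + p, s div m * (n+1) + q))) $$ (r mod m, s mod m))) $$ (r, s)"
      proof -
        have Pb: "\<Phi> blk = complex_of_real \<gamma> \<cdot>\<^sub>m \<Psi> (Matrix.mat (n+1) (n+1) (\<lambda>(p, q). X' $$ (?R * (n+1) + p, ?S * (n+1) + q)))"
          unfolding \<Phi>_def eqb ..
        have c2: "\<Psi> (Matrix.mat (n+1) (n+1) (\<lambda>(p, q). X' $$ (?R * (n+1) + p, ?S * (n+1) + q))) \<in> carrier_mat m m"
          using c1 eqb by simp
        show ?thesis using r s RS c2 Pb[unfolded blk_def] by simp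
      qed
    qed auto
    show ?thesis unfolding amp by (rule psd_smult[OF cpp[OF psdX']]) (use g in simp)
  qed
  have eqP: "\<Phi> (A j) = B j" if "j < k" for j
  proof -
    have Bc: "B j \<in> carrier_mat m m" using hB that unfolding hermitian_mat_def by auto
    show ?thesis unfolding \<Phi>_def using eqs that Bc g by (intro eq_matI) auto
  qed
  show ?thesis using linP cpP eqP unfolding completely_positive_def by blast
qed


lemma dir1:
  fixes n m k :: nat and A B :: "nat \<Rightarrow> complex mat"
  assumes n: "1 \<le> n" and cp: "completely_positive n m \<Phi>" and eqs: "\<forall>j<k. \<Phi> (A j) = B j"
    and hA: "\<forall>j<k. hermitian_mat n (A j)"
  shows "\<exists>(\<gamma>::real) \<Psi>. \<gamma> > 0 \<and> completely_positive (n + 1) m \<Psi> \<and> unital_map (n + 1) m \<Psi> \<and>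
            (\<forall>j<k. \<Psi> (direct_sum_zero n (A j)) = complex_of_real (inverse \<gamma>) \<cdot>\<^sub>m B j)"
proof -
  have n0: "0 < n" using n by simp
  have lin: "linear_map_mat n m \<Phi>"
    and cpp: "\<And>kk X. psd_mat (kk*n) X \<Longrightarrow> psd_mat (kk*m) (ampliation kk n m \<Phi> X)"
    using cp unfolding completely_positive_def by auto
  have lc: "\<And>X. X \<in> carrier_mat n n \<Longrightarrow> \<Phi> X \<in> carrier_mat m m"
    and la: "\<And>X Y. X \<in> carrier_mat n n \<Longrightarrow> Y \<in> carrier_mat n n \<Longrightarrow> \<Phi> (X + Y) = \<Phi> X + \<Phi> Y"
    and ls: "\<And>c X. X \<in> carrier_mat n n \<Longrightarrow> \<Phi> (c \<cdot>\<^sub>m X) = c \<cdot>\<^sub>m \<Phi> X"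
    using lin unfolding linear_map_mat_def by auto
  define P where "P = \<Phi> (1\<^sub>m n)"
  have Pc: "P \<in> carrier_mat m m" using lc by (simp add: P_def)
  have ampP: "ampliation 1 n m \<Phi> (1\<^sub>m n) = P"
    unfolding ampliation_def P_def
  proof (rule eq_matI)
    fix r s assume "r < dim_row (\<Phi> (1\<^sub>m n))" "s < dim_col (\<Phi> (1\<^sub>m n))"
    then have r: "r < m" and s: "s < m" using Pc by (auto simp: P_def)
    have "Matrix.mat n n (\<lambda>(p,q). (1\<^sub>m n :: complex mat) $$ (r div m * n + p, s div m * n + q)) = 1\<^sub>m n"
      using r s by (intro eq_matI) auto
    then show "Matrix.mat (1*m) (1*m) (\<lambda>(r,s). \<Phi> (Matrix.mat n n (\<lambda>(p,q). 1\<^sub>m n $$ (r div m * n + p, s div m * n + q))) $$ (r mod m, s mod m)) $$ (r,s)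
      = \<Phi> (1\<^sub>m n) $$ (r,s)" using r s by simp
  qed (use Pc in \<open>auto simp: P_def\<close>)
  have psdP: "psd_mat m P" using cpp[of 1 "1\<^sub>m n"] psd_one[of "1*n"] ampP by simp
  have hP: "hermitian_mat m P" using psdP unfolding psd_mat_def by simp
  have Pab: "P$$(a,b) = cnj (P$$(b,a))" if "a<m" "b<m" for a b
    using hP that unfolding hermitian_mat_def by blast
  define S where "S = (\<Sum>a<m. \<Sum>b<m. cmod (P$$(a,b)))"
  have S0: "0 \<le> S" unfolding S_def by (intro sum_nonneg) auto
  define \<gamma> where "\<gamma> = 1 + S"
  have g: "\<gamma> > 0" using S0 by (simp add: \<gamma>_def)
  define \<epsilon> where "\<epsilon> = inverse \<gamma>"
  have e0: "0 < \<epsilon>" using g by (simp add: \<epsilon>_def)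
  have eS: "\<epsilon> * S \<le> 1" using S0 by (simp add: \<epsilon>_def \<gamma>_def field_simps)
  define C where "C = Matrix.mat m m (\<lambda>(a,b). (if a = b then 1 else 0) - complex_of_real \<epsilon> * P$$(a,b))"
  have Cc: "C \<in> carrier_mat m m" unfolding C_def by simp
  have hC: "hermitian_mat m C" unfolding hermitian_mat_def
  proof (intro conjI allI impI Cc)
    fix a b assume ab: "a < m" "b < m"
    then show "C$$(a,b) = cnj (C$$(b,a))" unfolding C_def using Pab[OF ab] by simp
  qed
  have dd: "(\<Sum>b<m. if b = a then 0 else cmod (C$$(a,b))) \<le> Re (C$$(a,a))" if a: "a < m" for a
  proof -
    define E where "E = (\<Sum>b<m. if b = a then 0 else cmod (P$$(a,b)))"
    have "(\<Sum>b<m. if b = a then 0 else cmod (C$$(a,b))) = (\<Sum>b<m. \<epsilon> * (if b = a then 0 else cmod (P$$(a,b))))"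
    proof (rule sum.cong[OF refl])
      fix b assume "b \<in> {..<m}"
      then show "(if b = a then 0 else cmod (C$$(a,b))) = \<epsilon> * (if b = a then 0 else cmod (P$$(a,b)))"
        unfolding C_def using a e0 by (simp add: norm_mult)
    qed
    also have "\<dots> = \<epsilon> * E" unfolding E_def by (rule sum_distrib_left[symmetric])
    finally have D: "(\<Sum>b<m. if b = a then 0 else cmod (C$$(a,b))) = \<epsilon> * E" .
    have sp: "E + cmod (P$$(a,a)) = (\<Sum>b<m. cmod (P$$(a,b)))"
    proof -
      have "(\<Sum>b<m. cmod (P$$(a,b))) = (\<Sum>b<m. (if b = a then cmod (P$$(a,b)) else 0) + (if b = a then 0 else cmod (P$$(a,b))))"
        by (rule sum.cong) auto
      also have "\<dots> = cmod (P$$(a,a)) + E" unfolding sum.distrib E_def using a by (simp add: sum.delta)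
      finally show ?thesis by simp
    qed
    have rowS: "(\<Sum>b<m. cmod (P$$(a,b))) \<le> S" unfolding S_def
      by (rule member_le_sum[of a "{..<m}" "\<lambda>a. \<Sum>b<m. cmod (P$$(a,b))"]) (auto simp: sum_nonneg a)
    have Cre: "Re (C$$(a,a)) = 1 - \<epsilon> * Re (P$$(a,a))" using a by (simp add: C_def)
    have "Re (P$$(a,a)) \<le> cmod (P$$(a,a))" by (rule complex_Re_le_cmod)
    then have "\<epsilon> * (E + Re (P$$(a,a))) \<le> \<epsilon> * S" using sp rowS e0
      by (intro mult_left_mono) auto
    then show ?thesis unfolding D Cre using eS by (simp add: algebra_simps)
  qed
  define tr where "tr Y = Matrix.mat n n (\<lambda>(p,q). Y$$(p,q))" for Y :: "complex mat"
  define \<Psi> where "\<Psi> Y = complex_of_real \<epsilon> \<cdot>\<^sub>m \<Phi> (tr Y) + Y$$(n,n) \<cdot>\<^sub>m C" for Y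
  have trc: "tr Y \<in> carrier_mat n n" for Y unfolding tr_def by simp
  have PtC: "\<Phi> (tr Y) \<in> carrier_mat m m" for Y using lc[OF trc] .
  have PsiC: "\<Psi> Y \<in> carrier_mat m m" for Y unfolding \<Psi>_def using PtC Cc by simp
  have linPsi: "linear_map_mat (n+1) m \<Psi>" unfolding linear_map_mat_def
  proof (intro conjI ballI allI)
    fix X :: "complex mat" show "\<Psi> X \<in> carrier_mat m m" by (rule PsiC)
  next
    fix X Y :: "complex mat" assume X: "X \<in> carrier_mat (n+1) (n+1)" and Y: "Y \<in> carrier_mat (n+1) (n+1)"
    have t: "tr (X + Y) = tr X + tr Y" unfolding tr_def using X Y by (intro eq_matI) auto
    have nn: "(X + Y)$$(n,n) = X$$(n,n) + Y$$(n,n)" using X Y by simp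
    show "\<Psi> (X + Y) = \<Psi> X + \<Psi> Y" unfolding \<Psi>_def t nn la[OF trc trc]
      using PtC[of X] PtC[of Y] Cc by (intro eq_matI) (auto simp: algebra_simps)
  next
    fix c and X :: "complex mat" assume X: "X \<in> carrier_mat (n+1) (n+1)"
    have t: "tr (c \<cdot>\<^sub>m X) = c \<cdot>\<^sub>m tr X" unfolding tr_def using X by (intro eq_matI) auto
    have nn: "(c \<cdot>\<^sub>m X)$$(n,n) = c * X$$(n,n)" using X by simp
    show "\<Psi> (c \<cdot>\<^sub>m X) = c \<cdot>\<^sub>m \<Psi> X" unfolding \<Psi>_def t nn ls[OF trc]
      using PtC[of X] Cc by (intro eq_matI) (auto simp: algebra_simps)
  qed
  have unital: "unital_map (n+1) m \<Psi>" unfolding unital_map_def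
  proof -
    have t: "tr (1\<^sub>m (n+1)) = 1\<^sub>m n" unfolding tr_def by (intro eq_matI) auto
    have nn: "1\<^sub>m (n+1) $$ (n,n) = 1" by simp
    show "\<Psi> (1\<^sub>m (n+1)) = 1\<^sub>m m" unfolding \<Psi>_def t nn P_def[symmetric]
      using Pc by (intro eq_matI) (auto simp: C_def)
  qed
  have eqPsi: "\<Psi> (direct_sum_zero n (A j)) = complex_of_real (inverse \<gamma>) \<cdot>\<^sub>m B j" if j: "j < k" for j
  proof -
    have Ac: "A j \<in> carrier_mat n n" using hA j unfolding hermitian_mat_def by auto
    have t: "tr (direct_sum_zero n (A j)) = A j" unfolding tr_def dsz_alt[OF Ac]
      using Ac by (intro eq_matI) auto
    have nn: "direct_sum_zero n (A j) $$ (n,n) = 0" unfolding dsz_alt[OF Ac] by simp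
    have Bc: "B j \<in> carrier_mat m m" using lc[OF Ac] eqs j by auto
    show ?thesis unfolding \<Psi>_def t nn using eqs j Bc Cc by (intro eq_matI) (auto simp: \<epsilon>_def)
  qed
  have cpPsi: "psd_mat (kk*m) (ampliation kk (n+1) m \<Psi> Y)" if Y: "psd_mat (kk*(n+1)) Y" for kk and Y :: "complex mat"
  proof -
    define Yt where "Yt = Matrix.mat (kk*n) (kk*n) (\<lambda>(i,j). Y$$(emb n i, emb n j))"
    have psdYt: "psd_mat (kk*n) Yt" unfolding Yt_def
      by (rule psd_restrict[OF Y emb_inj[OF n0] emb_image_sub[OF n0]])
    define e2 where "e2 R = R*(n+1)+n" for R
    have inj2: "inj_on e2 {..<kk}"
    proof
      fix x y assume "e2 x = e2 y"
      then have "x*(n+1) = y*(n+1)" unfolding e2_def by (rule add_right_imp_eq)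
      then show "x = y" by (rule mult_right_cancel[THEN iffD1, rotated]) simp
    qed
    have im2: "e2 ` {..<kk} \<subseteq> {..<kk*(n+1)}" unfolding e2_def using idx_lt[of _ kk n "n+1"] by auto
    define Z where "Z = Matrix.mat kk kk (\<lambda>(i,j). Y$$(e2 i, e2 j))"
    have psdZ: "psd_mat kk Z" unfolding Z_def by (rule psd_restrict[OF Y inj2 im2])
    define K where "K = Matrix.mat (kk*m) (kk*m) (\<lambda>(r,s). Z$$(r div m, s div m) * C$$(r mod m, s mod m))"
    have psdK: "psd_mat (kk*m) K" unfolding K_def by (rule kron_psd[OF psdZ hC dd])
    have amp: "ampliation kk (n+1) m \<Psi> Y = complex_of_real \<epsilon> \<cdot>\<^sub>m ampliation kk n m \<Phi> Yt + K"
    proof (rule eq_matI)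
      fix r s assume "r < dim_row (complex_of_real \<epsilon> \<cdot>\<^sub>m ampliation kk n m \<Phi> Yt + K)"
        "s < dim_col (complex_of_real \<epsilon> \<cdot>\<^sub>m ampliation kk n m \<Phi> Yt + K)"
      then have r: "r < kk*m" and s: "s < kk*m" by (auto simp: K_def)
      let ?R = "r div m" and ?S = "s div m"
      have RS: "?R < kk" "?S < kk" "r mod m < m" "s mod m < m" using divmod_lt r s by auto
      define blk where "blk = Matrix.mat (n+1) (n+1) (\<lambda>(p, q). Y $$ (?R * (n+1) + p, ?S * (n+1) + q))"
      have t: "tr blk = Matrix.mat n n (\<lambda>(p, q). Yt $$ (?R * n + p, ?S * n + q))"
        unfolding tr_def
      proof (rule eq_matI)
        fix p q assume "p < dim_row (Matrix.mat n n (\<lambda>(p, q). Yt $$ (?R * n + p, ?S * n + q)))"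
          "q < dim_col (Matrix.mat n n (\<lambda>(p, q). Yt $$ (?R * n + p, ?S * n + q)))"
        then have pq: "p < n" "q < n" by auto
        have l: "?R * n + p < kk*n" "?S * n + q < kk*n" using idx_lt[OF RS(1) pq(1)] idx_lt[OF RS(2) pq(2)] by auto
        have "Yt $$ (?R * n + p, ?S * n + q) = Y $$ (?R * (n+1) + p, ?S * (n+1) + q)"
          unfolding Yt_def index_mat(1)[OF l] prod.case emb_block[OF pq(1)] emb_block[OF pq(2)] ..
        then show "Matrix.mat n n (\<lambda>(p,q). blk $$ (p,q)) $$ (p,q) = Matrix.mat n n (\<lambda>(p, q). Yt $$ (?R * n + p, ?S * n + q)) $$ (p,q)"
          using pq unfolding blk_def by simp
      qed auto
      have bn: "blk $$ (n,n) = Z $$ (?R, ?S)" unfolding blk_def Z_def e2_def using RS by simp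
      have Pb: "\<Psi> blk = complex_of_real \<epsilon> \<cdot>\<^sub>m \<Phi> (Matrix.mat n n (\<lambda>(p, q). Yt $$ (?R * n + p, ?S * n + q))) + Z $$ (?R, ?S) \<cdot>\<^sub>m C"
        unfolding \<Psi>_def t bn ..
      have c2: "\<Phi> (Matrix.mat n n (\<lambda>(p, q). Yt $$ (?R * n + p, ?S * n + q))) \<in> carrier_mat m m"
        using lc by simp
      show "ampliation kk (n+1) m \<Psi> Y $$ (r, s) =
        (complex_of_real \<epsilon> \<cdot>\<^sub>m ampliation kk n m \<Phi> Yt + K) $$ (r, s)"
        using r s RS c2 Cc Pb[unfolded blk_def] unfolding ampliation_def K_def by simp
    qed (auto simp: K_def ampliation_def)
    show ?thesis unfolding amp
      by (rule psd_add[OF psd_smult[OF cpp[OF psdYt]] psdK]) (use e0 in simp)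
  qed
  show ?thesis
    using g linPsi cpPsi unital eqPsi unfolding completely_positive_def by blast
qed


theorem theorem4p1:
  fixes n m k :: nat and A B :: "nat \<Rightarrow> complex mat"
  assumes "1 \<le> n" and "1 \<le> m"
    and "\<forall>j<k. hermitian_mat n (A j)"
    and "\<forall>j<k. hermitian_mat m (B j)"
  shows "(\<exists>\<Phi>. completely_positive n m \<Phi> \<and> (\<forall>j<k. \<Phi> (A j) = B j)) \<longleftrightarrow>
         (\<exists>(\<gamma>::real) \<Psi>. \<gamma> > 0 \<and> completely_positive (n + 1) m \<Psi> \<and> unital_map (n + 1) m \<Psi> \<and>
            (\<forall>j<k. \<Psi> (direct_sum_zero n (A j)) = complex_of_real (inverse \<gamma>) \<cdot>\<^sub>m B j))"
proof
  assume "\<exists>\<Phi>. completely_positive n m \<Phi> \<and> (\<forall>j<k. \<Phi> (A j) = B j)"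
  then obtain \<Phi> where "completely_positive n m \<Phi>" "\<forall>j<k. \<Phi> (A j) = B j" by blast
  then show "\<exists>(\<gamma>::real) \<Psi>. \<gamma> > 0 \<and> completely_positive (n + 1) m \<Psi> \<and> unital_map (n + 1) m \<Psi> \<and>
            (\<forall>j<k. \<Psi> (direct_sum_zero n (A j)) = complex_of_real (inverse \<gamma>) \<cdot>\<^sub>m B j)"
    using dir1[OF assms(1) _ _ assms(3)] by blast
next
  assume "\<exists>(\<gamma>::real) \<Psi>. \<gamma> > 0 \<and> completely_positive (n + 1) m \<Psi> \<and> unital_map (n + 1) m \<Psi> \<and>
            (\<forall>j<k. \<Psi> (direct_sum_zero n (A j)) = complex_of_real (inverse \<gamma>) \<cdot>\<^sub>m B j)"
  then obtain \<gamma> :: real and \<Psi> where "\<gamma> > 0" "completely_positive (n + 1) m \<Psi>"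
    "\<forall>j<k. \<Psi> (direct_sum_zero n (A j)) = complex_of_real (inverse \<gamma>) \<cdot>\<^sub>m B j" by blast
  then show "\<exists>\<Phi>. completely_positive n m \<Phi> \<and> (\<forall>j<k. \<Phi> (A j) = B j)"
    using dir2[OF assms(1) _ _ _ assms(4)] by blast
qed

end
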